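(* Let $\{S;\tilde w_1,\dots,\tilde w_N;p_1,\dots,p_N\}$ be a DIFS. Let $I\subset\{1,\dots,N\}$ be the set of indices $i$ for which the minimal absorbing set $\mathcal M[\tilde w_i,S]$ exists, and suppose $I\neq\varnothing$. Let $\mathcal A_{\mathcal F}$ be the family of the recurrent communication classes of the associated Markov chain. Then: (a) $|\mathcal A_{\mathcal F}|\le\min_{i\in I}\mathcal M_\#[\tilde w_i,S]$, where $\mathcal M_\#[\tilde w_i,S]$ denotes the number of components of $\mathcal M[\tilde w_i,S]$; (b) if for some $i,j\in I$ one has $\mathcal M[\tilde w_i,S]\subset\mathcal B[\mathcal M_k[\tilde w_j,S]]$ for some component $\mathcal M_k[\tilde w_j,S]$ of $\mathcal M[\tilde w_j,S]$, then $|\mathcal A_{\mathcal F}|\le1$.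
   Context: $\mathcal D^n(\delta)=\{\delta m:m\in\mathbb Z^n\}$ for fixed $\delta>0$; $\mathbb N=\{1,2,\dots\}$. A DIFS $\{S;\tilde w_1,\dots,\tilde w_N;p_1,\dots,p_N\}$ consists of $S\subset\mathcal D^n(\delta)$, maps $\tilde w_i:S\to S$, and functions $p_i:S\to(0,1]$ with $\sum_ip_i(\tilde x)=1$ for every $\tilde x\in S$; its associated Markov chain on $S$ has transition probabilities $P(\tilde x,\tilde y)=\sum_ip_i(\tilde x)\mathbf 1_{\{\tilde y\}}(\tilde w_i(\tilde x))$. Accessibility: $P^k(\tilde x,\tilde y)>0$ for some $k\ge1$; a communication class is a maximal nonempty set of mutually accessible states; a state is recurrent if the chain started there returns to it in finitely many steps a.s.; a recurrent communication class is a communication class of recurrent states. Absorbing sets: for a map $\tilde w$ and nonempty $C$ with $\tilde w(C)\subset C$, a set $\Lambda\subset C$ is absorbing for $\tilde w$ in $C$ if for each $\tilde x\in C$ there is $N$ with $\tilde w^{\circ i}(\tilde x)\in\Lambda$ for all $i\ge N$. If the intersection of all absorbing sets for $\tilde w$ in $C$ is itself absorbing in $C$, it is the minimal absorbing set $\mathcal M[\tilde w,C]$ (and it is said to exist). Its components are the equivalence classes of the relation $\tilde x\sim\tilde y\iff\tilde w^{\circ j}(\tilde x)=\tilde w^{\circ l}(\tilde y)$ for some $j,l\in\mathbb N$; the basin of a component $\mathcal M_k$ is $\mathcal B[\mathcal M_k]=\{\tilde x\in C:\exists i\in\mathbb N,\ \tilde w^{\circ i}(\tilde x)\in\mathcal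 M_k\}$. *)

theory Defs
  imports "HOL-Analysis.Analysis" "HOL-Library.Extended_Nat"
begin

definition lattice :: "real \<Rightarrow> (real ^ 'n) set" where
  "lattice \<delta> = {x. \<forall>i. \<exists>m::int. x $ i = \<delta> * of_int m}"

definition is_DIFS :: "real \<Rightarrow> 'a set \<Rightarrow> nat \<Rightarrow> (nat \<Rightarrow> 'a \<Rightarrow> 'a) \<Rightarrow> (nat \<Rightarrow> 'a \<Rightarrow> real) \<Rightarrow> bool"
  where "is_DIFS \<delta> S N w p \<longleftrightarrow>
     (\<forall>i\<in>{1..N}. w i ` S \<subseteq> S) \<and>
     (\<forall>i\<in>{1..N}. \<forall>x\<in>S. 0 < p i x \<and> p i x \<le> 1) \<and>
     (\<forall>x\<in>S. (\<Sum>i=1..N. p i x) = 1)"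

definition trans_prob :: "nat \<Rightarrow> (nat \<Rightarrow> 'a \<Rightarrow> 'a) \<Rightarrow> (nat \<Rightarrow> 'a \<Rightarrow> real) \<Rightarrow> 'a \<Rightarrow> 'a \<Rightarrow> real"
  where "trans_prob N w p x y = (\<Sum>i=1..N. p i x * (if w i x = y then 1 else 0))"

fun nstep :: "nat \<Rightarrow> (nat \<Rightarrow> 'a \<Rightarrow> 'a) \<Rightarrow> (nat \<Rightarrow> 'a \<Rightarrow> real) \<Rightarrow> nat \<Rightarrow> 'a \<Rightarrow> 'a \<Rightarrow> real" where
  "nstep N w p 0 x y = (if x = y then 1 else 0)"
| "nstep N w p (Suc k) x y = (\<Sum>i=1..N. p i x * nstep N w p k (w i x) y)"

definition accessible :: "nat \<Rightarrow> (nat \<Rightarrow> 'a \<Rightarrow> 'a) \<Rightarrow> (nat \<Rightarrow> 'a \<Rightarrow> real) \<Rightarrow> 'a \<Rightarrow> 'a \<Rightarrow> bool"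
  where "accessible N w p x y \<longleftrightarrow> (\<exists>k\<ge>1. nstep N w p k x y > 0)"

text \<open>Probability that the chain started at x first hits y at step k (k >= 1).\<close>
fun first_hit :: "nat \<Rightarrow> (nat \<Rightarrow> 'a \<Rightarrow> 'a) \<Rightarrow> (nat \<Rightarrow> 'a \<Rightarrow> real) \<Rightarrow> nat \<Rightarrow> 'a \<Rightarrow> 'a \<Rightarrow> real" where
  "first_hit N w p 0 x y = 0"
| "first_hit N w p (Suc 0) x y = trans_prob N w p x y"
| "first_hit N w p (Suc (Suc k)) x y =
     (\<Sum>i=1..N. p i x * (if w i x = y then 0 else first_hit N w p (Suc k) (w i x) y))"

text \<open>Recurrent: the chain started at x returns to x in finitely many steps almost surely,
  i.e. the first-return probabilities sum to 1.\<close>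
definition recurrent :: "nat \<Rightarrow> (nat \<Rightarrow> 'a \<Rightarrow> 'a) \<Rightarrow> (nat \<Rightarrow> 'a \<Rightarrow> real) \<Rightarrow> 'a \<Rightarrow> bool"
  where "recurrent N w p x \<longleftrightarrow> (\<lambda>k. first_hit N w p k x x) sums 1"

definition mutually_accessible :: "nat \<Rightarrow> (nat \<Rightarrow> 'a \<Rightarrow> 'a) \<Rightarrow> (nat \<Rightarrow> 'a \<Rightarrow> real) \<Rightarrow> 'a set \<Rightarrow> bool"
  where "mutually_accessible N w p C \<longleftrightarrow> (\<forall>x\<in>C. \<forall>y\<in>C. accessible N w p x y)"

definition comm_class :: "'a set \<Rightarrow> nat \<Rightarrow> (nat \<Rightarrow> 'a \<Rightarrow> 'a) \<Rightarrow> (nat \<Rightarrow> 'a \<Rightarrow> real) \<Rightarrow> 'a set \<Rightarrow> bool"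
  where "comm_class S N w p C \<longleftrightarrow> C \<noteq> {} \<and> C \<subseteq> S \<and> mutually_accessible N w p C \<and>
           (\<forall>D. C \<subseteq> D \<and> D \<subseteq> S \<and> mutually_accessible N w p D \<longrightarrow> D = C)"

definition recurrent_classes :: "'a set \<Rightarrow> nat \<Rightarrow> (nat \<Rightarrow> 'a \<Rightarrow> 'a) \<Rightarrow> (nat \<Rightarrow> 'a \<Rightarrow> real) \<Rightarrow> 'a set set"
  where "recurrent_classes S N w p =
           {C. comm_class S N w p C \<and> (\<forall>x\<in>C. recurrent N w p x)}"

definition absorbing :: "('a \<Rightarrow> 'a) \<Rightarrow> 'a set \<Rightarrow> 'a set \<Rightarrow> bool"
  where "absorbing f C L \<longleftrightarrow> L \<subseteq> C \<and> (\<forall>x\<in>C. \<exists>M. \<forall>i\<ge>M. (f ^^ i) x \<in> L)"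

definition min_abs :: "('a \<Rightarrow> 'a) \<Rightarrow> 'a set \<Rightarrow> 'a set"
  where "min_abs f C = \<Inter> {L. absorbing f C L}"

definition min_abs_exists :: "('a \<Rightarrow> 'a) \<Rightarrow> 'a set \<Rightarrow> bool"
  where "min_abs_exists f C \<longleftrightarrow> absorbing f C (min_abs f C)"

definition comp_rel :: "('a \<Rightarrow> 'a) \<Rightarrow> 'a set \<Rightarrow> ('a \<times> 'a) set"
  where "comp_rel f M = {(x, y). x \<in> M \<and> y \<in> M \<and> (\<exists>j\<ge>1. \<exists>l\<ge>1. (f ^^ j) x = (f ^^ l) y)}"

definition components :: "('a \<Rightarrow> 'a) \<Rightarrow> 'a set \<Rightarrow> 'a set set"
  where "components f C = min_abs f C // comp_rel f (min_abs f C)"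

definition basin :: "('a \<Rightarrow> 'a) \<Rightarrow> 'a set \<Rightarrow> 'a set \<Rightarrow> 'a set"
  where "basin f C K = {x \<in> C. \<exists>i\<ge>1. (f ^^ i) x \<in> K}"

definition ecard :: "'a set \<Rightarrow> enat"
  where "ecard A = (if finite A then enat (card A) else \<infinity>)"

end

theory Submission
  imports Defs
begin

lemma difs_map: "is_DIFS d S N w p \<Longrightarrow> i \<in> {1..N} \<Longrightarrow> z \<in> S \<Longrightarrow> w i z \<in> S"
  unfolding is_DIFS_def by blast

lemma difs_pos: "is_DIFS d S N w p \<Longrightarrow> i \<in> {1..N} \<Longrightarrow> z \<in> S \<Longrightarrow> 0 < p i z"
  unfolding is_DIFS_def by blast

lemma difs_sum: "is_DIFS d S N w p \<Longrightarrow> z \<in> S \<Longrightarrow> (\<Sum>i=1..N. p i z) = 1"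
  unfolding is_DIFS_def by blast

lemma difs_nonneg: "is_DIFS d S N w p \<Longrightarrow> i \<in> {1..N} \<Longrightarrow> z \<in> S \<Longrightarrow> 0 \<le> p i z"
  unfolding is_DIFS_def by (meson less_imp_le)

lemma nstep_nonneg:
  assumes D: "is_DIFS d S N w p"
  shows "z \<in> S \<Longrightarrow> 0 \<le> nstep N w p k z y"
proof (induction k arbitrary: z)
  case 0 then show ?case by simp
next
  case (Suc k)
  show ?case
    using Suc difs_map[OF D] difs_nonneg[OF D]
    by (auto intro!: sum_nonneg mult_nonneg_nonneg)
qed

lemma fh_nonneg:
  assumes D: "is_DIFS d S N w p"
  shows "z \<in> S \<Longrightarrow> 0 \<le> first_hit N w p k z y"
proof (induction k arbitrary: z rule: nat_less_induct)
  case (1 k z)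
  show ?case
  proof (cases k)
    case 0 then show ?thesis by simp
  next
    case (Suc m)
    show ?thesis
    proof (cases m)
      case 0
      then show ?thesis using Suc 1 difs_nonneg[OF D]
        by (auto simp: trans_prob_def intro!: sum_nonneg mult_nonneg_nonneg)
    next
      case (Suc m')
      then show ?thesis using \<open>k = Suc m\<close> 1 difs_nonneg[OF D] difs_map[OF D]
        by (auto intro!: sum_nonneg mult_nonneg_nonneg)
    qed
  qed
qed

lemma fh_le_nstep:
  assumes D: "is_DIFS d S N w p"
  shows "z \<in> S \<Longrightarrow> first_hit N w p k z y \<le> nstep N w p k z y"
proof (induction k arbitrary: z rule: nat_less_induct)
  case (1 k z)
  show ?case
  proof (cases k)
    case 0 then show ?thesis by simp
  next
    case (Suc m)
    show ?thesis
    proof (cases m)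
      case 0
      then show ?thesis using Suc by (simp add: trans_prob_def)
    next
      case (Suc m')
      have "first_hit N w p k z y = (\<Sum>i=1..N. p i z * (if w i z = y then 0 else first_hit N w p (Suc m') (w i z) y))"
        using Suc \<open>k = Suc m\<close> by simp
      also have "\<dots> \<le> (\<Sum>i=1..N. p i z * nstep N w p (Suc m') (w i z) y)"
      proof (rule sum_mono)
        fix i assume i: "i \<in> {1..N}"
        have "(if w i z = y then 0 else first_hit N w p (Suc m') (w i z) y) \<le> nstep N w p (Suc m') (w i z) y"
          using 1 Suc \<open>k = Suc m\<close> nstep_nonneg[OF D difs_map[OF D i \<open>z \<in> S\<close>], of "Suc m'" y] difs_map[OF D i \<open>z \<in> S\<close>]
          by (cases "w i z = y") (simp_all del: nstep.simps)
        then show "p i z * (if w i z = y then 0 else first_hit N w p (Suc m') (w i z) y) \<le> p i z * nstep N w p (Suc m') (w i z) y"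
          using difs_pos[OF D i \<open>z \<in> S\<close>] by (intro mult_left_mono) auto
      qed
      also have "\<dots> = nstep N w p k z y" using Suc \<open>k = Suc m\<close> by simp
      finally show ?thesis .
    qed
  qed
qed

lemma T_rec:
  "(\<Sum>k<Suc n. first_hit N w p (Suc k) z y) =
   (\<Sum>i=1..N. p i z * (if w i z = y then 1 else (\<Sum>k<n. first_hit N w p (Suc k) (w i z) y)))"
proof -
  have "(\<Sum>k<n. first_hit N w p (Suc (Suc k)) z y) =
     (\<Sum>k<n. \<Sum>i=1..N. p i z * (if w i z = y then 0 else first_hit N w p (Suc k) (w i z) y))"
    by simp
  also have "\<dots> = (\<Sum>i=1..N. \<Sum>k<n. p i z * (if w i z = y then 0 else first_hit N w p (Suc k) (w i z) y))"
    by (rule sum.swap)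
  also have "\<dots> = (\<Sum>i=1..N. p i z * (if w i z = y then 0 else (\<Sum>k<n. first_hit N w p (Suc k) (w i z) y)))"
    by (rule sum.cong) (auto simp: sum_distrib_left)
  finally have A: "(\<Sum>k<n. first_hit N w p (Suc (Suc k)) z y) =
     (\<Sum>i=1..N. p i z * (if w i z = y then 0 else (\<Sum>k<n. first_hit N w p (Suc k) (w i z) y)))" .
  have "(\<Sum>k<Suc n. first_hit N w p (Suc k) z y) = first_hit N w p (Suc 0) z y + (\<Sum>k<n. first_hit N w p (Suc (Suc k)) z y)"
    by (simp only: sum.lessThan_Suc_shift)
  also have "\<dots> = (\<Sum>i=1..N. p i z * (if w i z = y then 1 else 0)) +
     (\<Sum>i=1..N. p i z * (if w i z = y then 0 else (\<Sum>k<n. first_hit N w p (Suc k) (w i z) y)))"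
    using A by (simp add: trans_prob_def)
  also have "\<dots> = (\<Sum>i=1..N. p i z * (if w i z = y then 1 else (\<Sum>k<n. first_hit N w p (Suc k) (w i z) y)))"
    by (simp add: sum.distrib[symmetric] distrib_left[symmetric] if_distrib cong: if_cong)
  finally show ?thesis .
qed


lemma T_le1:
  assumes D: "is_DIFS d S N w p"
  shows "z \<in> S \<Longrightarrow> (\<Sum>k<n. first_hit N w p (Suc k) z y) \<le> 1"
proof (induction n arbitrary: z)
  case 0 then show ?case by simp
next
  case (Suc n)
  have "(\<Sum>k<Suc n. first_hit N w p (Suc k) z y) =
   (\<Sum>i=1..N. p i z * (if w i z = y then 1 else (\<Sum>k<n. first_hit N w p (Suc k) (w i z) y)))"
    by (rule T_rec)
  also have "\<dots> \<le> (\<Sum>i=1..N. p i z * 1)"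
  proof (rule sum_mono)
    fix i assume i: "i \<in> {1..N}"
    show "p i z * (if w i z = y then 1 else (\<Sum>k<n. first_hit N w p (Suc k) (w i z) y)) \<le> p i z * 1"
      using Suc.IH[OF difs_map[OF D i Suc.prems]] difs_nonneg[OF D i Suc.prems]
      by (intro mult_left_mono) auto
  qed
  also have "\<dots> = 1" using difs_sum[OF D Suc.prems] by simp
  finally show ?case .
qed

lemma fh_summable:
  assumes D: "is_DIFS d S N w p" and z: "z \<in> S"
  shows "summable (\<lambda>k. first_hit N w p (Suc k) z y)"
  by (rule summableI_nonneg_bounded[where x=1]) (use fh_nonneg[OF D z] T_le1[OF D z] in auto)

definition hret :: "nat \<Rightarrow> (nat \<Rightarrow> 'a \<Rightarrow> 'a) \<Rightarrow> (nat \<Rightarrow> 'a \<Rightarrow> real) \<Rightarrow> 'a \<Rightarrow> 'a \<Rightarrow> real"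
  where "hret N w p z y = (\<Sum>k. first_hit N w p (Suc k) z y)"

lemma hret_le1:
  assumes D: "is_DIFS d S N w p" and z: "z \<in> S"
  shows "hret N w p z y \<le> 1"
  unfolding hret_def by (rule suminf_le_const[OF fh_summable[OF D z]]) (rule T_le1[OF D z])

lemma hret_rec:
  assumes D: "is_DIFS d S N w p" and z: "z \<in> S"
  shows "hret N w p z y = (\<Sum>i=1..N. p i z * (if w i z = y then 1 else hret N w p (w i z) y))"
proof -
  let ?T = "\<lambda>n z. (\<Sum>k<n. first_hit N w p (Suc k) z y)"
  have L: "\<And>z. z \<in> S \<Longrightarrow> (\<lambda>n. ?T n z) \<longlonglongrightarrow> hret N w p z y"
    unfolding hret_def by (rule summable_LIMSEQ) (rule fh_summable[OF D])
  have "(\<lambda>n. ?T (Suc n) z) \<longlonglongrightarrow> hret N w p z y"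
    using L[OF z] by (rule LIMSEQ_Suc)
  moreover have "(\<lambda>n. ?T (Suc n) z) \<longlonglongrightarrow> (\<Sum>i=1..N. p i z * (if w i z = y then 1 else hret N w p (w i z) y))"
  proof -
    have "(\<lambda>n. (\<Sum>i=1..N. p i z * (if w i z = y then 1 else ?T n (w i z)))) \<longlonglongrightarrow> (\<Sum>i=1..N. p i z * (if w i z = y then 1 else hret N w p (w i z) y))"
    proof (rule tendsto_sum, rule tendsto_mult_left)
      fix i assume i: "i \<in> {1..N}"
      show "(\<lambda>n. if w i z = y then 1 else ?T n (w i z)) \<longlonglongrightarrow> (if w i z = y then 1 else hret N w p (w i z) y)"
        using L[OF difs_map[OF D i z]] by (cases "w i z = y") auto
    qed
    then show ?thesis by (simp only: T_rec)
  qed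
  ultimately show ?thesis by (rule LIMSEQ_unique)
qed

lemma recurrent_hret: "recurrent N w p x \<Longrightarrow> hret N w p x x = 1"
proof -
  assume r: "recurrent N w p x"
  have "(\<lambda>k. first_hit N w p (Suc k) x x) sums 1"
    using r sums_Suc_iff[of "\<lambda>k. first_hit N w p k x x" 1] unfolding recurrent_def by simp
  then show ?thesis unfolding hret_def by (simp add: sums_iff)
qed

lemma hret_prop:
  assumes D: "is_DIFS d S N w p" and hy: "hret N w p y y = 1"
  shows "a \<in> S \<Longrightarrow> hret N w p a y = 1 \<Longrightarrow> nstep N w p k a z > 0 \<Longrightarrow> z \<in> S \<and> hret N w p z y = 1"
proof (induction k arbitrary: a)
  case 0 then show ?case by (simp split: if_splits)
next
  case (Suc k)
  have "\<exists>i\<in>{1..N}. 0 < p i a * nstep N w p k (w i a) z"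
  proof (rule ccontr)
    assume "\<not> ?thesis"
    then have "(\<Sum>i=1..N. p i a * nstep N w p k (w i a) z) \<le> 0"
      by (intro sum_nonpos) (simp add: not_less)
    then show False using Suc.prems(3) by simp
  qed
  then obtain i where i: "i \<in> {1..N}" and pos: "0 < p i a * nstep N w p k (w i a) z" by blast
  have wS: "w i a \<in> S" using difs_map[OF D i Suc.prems(1)] .
  have ns: "0 < nstep N w p k (w i a) z"
    using pos difs_pos[OF D i Suc.prems(1)] by (simp add: zero_less_mult_iff)
  have h1: "hret N w p (w i a) y = 1"
  proof (cases "w i a = y")
    case True then show ?thesis using hy by simp
  next
    case False
    show ?thesis
    proof (rule ccontr)
      assume ne: "hret N w p (w i a) y \<noteq> 1"
      have lt: "hret N w p (w i a) y < 1" using ne hret_le1[OF D wS, of y] by simp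
      have "hret N w p a y = (\<Sum>j=1..N. p j a * (if w j a = y then 1 else hret N w p (w j a) y))"
        by (rule hret_rec[OF D Suc.prems(1)])
      also have "\<dots> < (\<Sum>j=1..N. p j a * 1)"
      proof (rule sum_strict_mono_ex1)
        show "finite {1..N}" by simp
        show "\<forall>j\<in>{1..N}. p j a * (if w j a = y then 1 else hret N w p (w j a) y) \<le> p j a * 1"
        proof
          fix j assume j: "j \<in> {1..N}"
          have "(if w j a = y then 1 else hret N w p (w j a) y) \<le> 1"
            using hret_le1[OF D difs_map[OF D j Suc.prems(1)]] by simp
          then show "p j a * (if w j a = y then 1 else hret N w p (w j a) y) \<le> p j a * 1"
            by (rule mult_left_mono[OF _ difs_nonneg[OF D j Suc.prems(1)]])
        qed
        show "\<exists>j\<in>{1..N}. p j a * (if w j a = y then 1 else hret N w p (w j a) y) < p j a * 1"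
          using i False lt difs_pos[OF D i Suc.prems(1)] by (intro bexI[of _ i]) auto
      qed
      also have "\<dots> = 1" using difs_sum[OF D Suc.prems(1)] by simp
      finally show False using Suc.prems(2) by simp
    qed
  qed
  show ?case by (rule Suc.IH[OF wS h1 ns])
qed

lemma hret_pos_access:
  assumes D: "is_DIFS d S N w p" and z: "z \<in> S" and h: "hret N w p z y = 1"
  shows "accessible N w p z y"
proof -
  have "\<exists>k. first_hit N w p (Suc k) z y \<noteq> 0"
  proof (rule ccontr)
    assume "\<not> ?thesis"
    then have "hret N w p z y = 0" unfolding hret_def by simp
    then show False using h by simp
  qed
  then obtain k where "first_hit N w p (Suc k) z y \<noteq> 0" by blast
  then have "0 < first_hit N w p (Suc k) z y" using fh_nonneg[OF D z, of "Suc k" y] by simp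
  then have "0 < nstep N w p (Suc k) z y" using fh_le_nstep[OF D z, of "Suc k" y] by simp
  then show ?thesis unfolding accessible_def by (intro exI[of _ "Suc k"]) simp
qed

lemma recurrent_self:
  assumes D: "is_DIFS d S N w p" and x: "x \<in> S" and r: "recurrent N w p x"
  shows "accessible N w p x x"
  by (rule hret_pos_access[OF D x recurrent_hret[OF r]])

lemma recurrent_back:
  assumes D: "is_DIFS d S N w p" and x: "x \<in> S" and r: "recurrent N w p x"
    and a: "accessible N w p x y"
  shows "accessible N w p y x"
proof -
  obtain k where "nstep N w p k x y > 0" using a unfolding accessible_def by blast
  then have "y \<in> S \<and> hret N w p y x = 1"
    using hret_prop[OF D recurrent_hret[OF r] x recurrent_hret[OF r]] by blast
  then show ?thesis using hret_pos_access[OF D] by blast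
qed

lemma nstep_trans:
  assumes D: "is_DIFS d S N w p"
  shows "x \<in> S \<Longrightarrow> nstep N w p a x y * nstep N w p b y z \<le> nstep N w p (a + b) x z"
proof (induction a arbitrary: x)
  case 0 then show ?case using nstep_nonneg[OF D 0] by simp
next
  case (Suc a)
  have "nstep N w p (Suc a) x y * nstep N w p b y z = (\<Sum>i=1..N. p i x * (nstep N w p a (w i x) y * nstep N w p b y z))"
    by (simp add: sum_distrib_right mult.assoc)
  also have "\<dots> \<le> (\<Sum>i=1..N. p i x * nstep N w p (a + b) (w i x) z)"
    using Suc.IH[OF difs_map[OF D _ Suc.prems]] difs_nonneg[OF D _ Suc.prems]
    by (intro sum_mono mult_left_mono) auto
  also have "\<dots> = nstep N w p (Suc a + b) x z" by simp
  finally show ?case .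
qed

lemma accessible_trans:
  assumes D: "is_DIFS d S N w p" and x: "x \<in> S"
    and "accessible N w p x y" and "accessible N w p y z"
  shows "accessible N w p x z"
proof -
  obtain a b where a: "a \<ge> 1" "nstep N w p a x y > 0" and b: "b \<ge> 1" "nstep N w p b y z > 0"
    using assms unfolding accessible_def by blast
  have "0 < nstep N w p a x y * nstep N w p b y z" using a b by simp
  also have "\<dots> \<le> nstep N w p (a + b) x z" by (rule nstep_trans[OF D x])
  finally show ?thesis unfolding accessible_def using a by (intro exI[of _ "a+b"]) simp
qed


lemma class_eq:
  assumes D: "is_DIFS d S N w p" and C: "comm_class S N w p C" and C': "comm_class S N w p C'"
    and z: "z \<in> C" "z \<in> C'"
  shows "C = C'"
proof -
  have CS: "C \<subseteq> S" and C'S: "C' \<subseteq> S" using C C' unfolding comm_class_def by auto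
  have mC: "mutually_accessible N w p C" and mC': "mutually_accessible N w p C'"
    using C C' unfolding comm_class_def by auto
  have "mutually_accessible N w p (C \<union> C')"
    unfolding mutually_accessible_def
  proof (intro ballI)
    fix a b assume a: "a \<in> C \<union> C'" and b: "b \<in> C \<union> C'"
    have aS: "a \<in> S" using a CS C'S by auto
    have az: "accessible N w p a z" using a z mC mC' unfolding mutually_accessible_def by auto
    have zb: "accessible N w p z b" using b z mC mC' unfolding mutually_accessible_def by auto
    show "accessible N w p a b" by (rule accessible_trans[OF D aS az zb])
  qed
  moreover have maxC: "\<And>D. C \<subseteq> D \<Longrightarrow> D \<subseteq> S \<Longrightarrow> mutually_accessible N w p D \<Longrightarrow> D = C"
    using C unfolding comm_class_def by blast
  moreover have maxC': "\<And>D. C' \<subseteq> D \<Longrightarrow> D \<subseteq> S \<Longrightarrow> mutually_accessible N w p D \<Longrightarrow> D = C'"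
    using C' unfolding comm_class_def by blast
  ultimately have "C \<union> C' = C" and "C \<union> C' = C'" using CS C'S by auto
  then show ?thesis by simp
qed

lemma class_closed:
  assumes D: "is_DIFS d S N w p" and C: "C \<in> recurrent_classes S N w p"
    and x: "x \<in> C" and i: "i \<in> {1..N}"
  shows "w i x \<in> C"
proof -
  have cc: "comm_class S N w p C" and rec: "\<And>y. y \<in> C \<Longrightarrow> recurrent N w p y"
    using C unfolding recurrent_classes_def by auto
  have CS: "C \<subseteq> S" and mC: "mutually_accessible N w p C"
    using cc unfolding comm_class_def by auto
  have xS: "x \<in> S" using x CS by auto
  have wS: "w i x \<in> S" using difs_map[OF D i xS] .
  have "(\<lambda>j. p j x * (if w j x = w i x then 1 else 0)) i \<le> (\<Sum>j=1..N. p j x * (if w j x = w i x then 1 else 0))"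
    by (rule member_le_sum[OF i]) (auto intro: difs_nonneg[OF D _ xS])
  then have "0 < nstep N w p 1 x (w i x)" using difs_pos[OF D i xS] by simp
  then have xw: "accessible N w p x (w i x)" unfolding accessible_def by (intro exI[of _ 1]) simp
  have wx: "accessible N w p (w i x) x" by (rule recurrent_back[OF D xS rec[OF x] xw])
  have "mutually_accessible N w p (insert (w i x) C)"
    unfolding mutually_accessible_def
  proof (intro ballI)
    fix a b assume a: "a \<in> insert (w i x) C" and b: "b \<in> insert (w i x) C"
    have aS: "a \<in> S" using a CS wS by auto
    have ax: "accessible N w p a x"
      using a wx x mC unfolding mutually_accessible_def by auto
    have xS': "x \<in> S" by (rule xS)
    have xb: "accessible N w p x b"
      using b xw x mC unfolding mutually_accessible_def by auto
    show "accessible N w p a b" by (rule accessible_trans[OF D aS ax xb])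
  qed
  moreover have maxC: "\<And>D. C \<subseteq> D \<Longrightarrow> D \<subseteq> S \<Longrightarrow> mutually_accessible N w p D \<Longrightarrow> D = C"
    using cc unfolding comm_class_def by blast
  ultimately have "insert (w i x) C = C" using CS wS by auto
  then show ?thesis by blast
qed

lemma class_orbit:
  assumes D: "is_DIFS d S N w p" and C: "C \<in> recurrent_classes S N w p"
    and x: "x \<in> C" and i: "i \<in> {1..N}"
  shows "(w i ^^ n) x \<in> C"
  by (induction n) (auto intro: class_closed[OF D C _ i] simp: x)

lemma same_comp:
  assumes D: "is_DIFS d S N w p" and C: "C \<in> recurrent_classes S N w p"
    and C': "C' \<in> recurrent_classes S N w p" and i: "i \<in> {1..N}"
    and K: "K \<in> components (w i) S" and c: "c \<in> C" "c \<in> K" and c': "c' \<in> C'" "c' \<in> K"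
  shows "C = C'"
proof -
  let ?f = "w i"
  obtain a where "K = comp_rel ?f (min_abs ?f S) `` {a}"
    using K unfolding components_def by (auto elim: quotientE)
  then have "(a, c) \<in> comp_rel ?f (min_abs ?f S)" "(a, c') \<in> comp_rel ?f (min_abs ?f S)"
    using c c' by auto
  then obtain j1 l1 j2 l2 where e1: "(?f ^^ j1) a = (?f ^^ l1) c" and e2: "(?f ^^ j2) a = (?f ^^ l2) c'"
    unfolding comp_rel_def by blast
  have "(?f ^^ (j2 + j1)) a = (?f ^^ (j2 + l1)) c" by (simp add: funpow_add e1)
  moreover have "(?f ^^ (j2 + j1)) a = (?f ^^ (j1 + l2)) c'"
    by (simp add: funpow_add e2 add.commute[of j2 j1])
  ultimately have eq: "(?f ^^ (j2 + l1)) c = (?f ^^ (j1 + l2)) c'" by simp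
  have q1: "(?f ^^ (j2 + l1)) c \<in> C" by (rule class_orbit[OF D C c(1) i])
  have q2: "(?f ^^ (j2 + l1)) c \<in> C'" unfolding eq by (rule class_orbit[OF D C' c'(1) i])
  have cc: "comm_class S N w p C" "comm_class S N w p C'"
    using C C' unfolding recurrent_classes_def by auto
  show ?thesis by (rule class_eq[OF D cc q1 q2])
qed

lemma meets_min_abs:
  assumes D: "is_DIFS d S N w p" and C: "C \<in> recurrent_classes S N w p"
    and i: "i \<in> {1..N}" and ex: "min_abs_exists (w i) S"
  shows "\<exists>m\<in>C. m \<in> min_abs (w i) S"
proof -
  have "C \<noteq> {}" "C \<subseteq> S" using C unfolding recurrent_classes_def comm_class_def by auto
  then obtain x where x: "x \<in> C" "x \<in> S" by blast
  obtain M where "\<forall>n\<ge>M. (w i ^^ n) x \<in> min_abs (w i) S"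
    using ex x unfolding min_abs_exists_def absorbing_def by blast
  then have "(w i ^^ M) x \<in> min_abs (w i) S" by simp
  moreover have "(w i ^^ M) x \<in> C" by (rule class_orbit[OF D C x(1) i])
  ultimately show ?thesis by blast
qed

lemma comp_of:
  assumes "m \<in> min_abs f S"
  shows "comp_rel f (min_abs f S) `` {m} \<in> components f S \<and> m \<in> comp_rel f (min_abs f S) `` {m}"
proof
  show "comp_rel f (min_abs f S) `` {m} \<in> components f S"
    unfolding components_def using assms by (rule quotientI)
  have "(m, m) \<in> comp_rel f (min_abs f S)"
    unfolding comp_rel_def using assms by (auto intro!: exI[of _ 1])
  then show "m \<in> comp_rel f (min_abs f S) `` {m}" by simp
qed

lemma ecard_inj:
  assumes "inj_on g A" "g ` A \<subseteq> B"
  shows "ecard A \<le> ecard B"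
proof (cases "finite B")
  case True
  have fA: "finite A" using finite_imageD[OF finite_subset[OF assms(2) True] assms(1)] .
  have "card A \<le> card B" by (rule card_inj_on_le[OF assms True])
  then show ?thesis using True fA unfolding ecard_def by simp
next
  case False then show ?thesis unfolding ecard_def by simp
qed

lemma ecard_le1:
  assumes "\<forall>C\<in>A. \<forall>C'\<in>A. C = C'"
  shows "ecard A \<le> 1"
proof -
  have "A = {} \<or> (\<exists>c. A = {c})" using assms by blast
  then show ?thesis unfolding ecard_def by (auto simp: one_enat_def)
qed

theorem theorem12:
  fixes \<delta> :: real and S :: "(real ^ 'n) set" and N :: nat
    and w :: "nat \<Rightarrow> real ^ 'n \<Rightarrow> real ^ 'n" and p :: "nat \<Rightarrow> real ^ 'n \<Rightarrow> real"
    and I :: "nat set"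
  assumes "\<delta> > 0" and "S \<subseteq> lattice \<delta>"
    and "is_DIFS \<delta> S N w p"
    and "I = {i \<in> {1..N}. min_abs_exists (w i) S}"
    and "I \<noteq> {}"
  shows "ecard (recurrent_classes S N w p) \<le> (INF i\<in>I. ecard (components (w i) S)) \<and>
         ((\<exists>i\<in>I. \<exists>j\<in>I. \<exists>K\<in>components (w j) S. min_abs (w i) S \<subseteq> basin (w j) S K)
           \<longrightarrow> ecard (recurrent_classes S N w p) \<le> 1)"
proof
  note D = assms(3)
  let ?R = "recurrent_classes S N w p"
  show "ecard ?R \<le> (INF i\<in>I. ecard (components (w i) S))"
  proof (rule INF_greatest)
    fix i assume "i \<in> I"
    then have i: "i \<in> {1..N}" and ex: "min_abs_exists (w i) S" using assms(4) by auto
    let ?P = "\<lambda>C K. K \<in> components (w i) S \<and> C \<inter> K \<noteq> {}"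
    define g where "g C = (SOME K. ?P C K)" for C
    have gP: "?P C (g C)" if hC: "C \<in> ?R" for C
    proof -
      obtain m where m1: "m \<in> C" and m2: "m \<in> min_abs (w i) S" using meets_min_abs[OF D hC i ex] by blast
      have "comp_rel (w i) (min_abs (w i) S) `` {m} \<in> components (w i) S"
        and "m \<in> comp_rel (w i) (min_abs (w i) S) `` {m}" using comp_of[OF m2] by auto
      then have "?P C (comp_rel (w i) (min_abs (w i) S) `` {m})" using m1 by blast
      then show ?thesis unfolding g_def by (rule someI)
    qed
    have "inj_on g ?R"
    proof (rule inj_onI)
      fix C C' assume C: "C \<in> ?R" and C': "C' \<in> ?R" and e: "g C = g C'"
      obtain c where c: "c \<in> C" "c \<in> g C" using gP[OF C] by blast
      obtain c' where c': "c' \<in> C'" "c' \<in> g C" using gP[OF C'] e by auto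
      have K: "g C \<in> components (w i) S" using gP[OF C] by blast
      show "C = C'" by (rule same_comp[OF D C C' i K c c'])
    qed
    moreover have "g ` ?R \<subseteq> components (w i) S" using gP by blast
    ultimately show "ecard ?R \<le> ecard (components (w i) S)" by (rule ecard_inj)
  qed
  show "(\<exists>i\<in>I. \<exists>j\<in>I. \<exists>K\<in>components (w j) S. min_abs (w i) S \<subseteq> basin (w j) S K)
           \<longrightarrow> ecard ?R \<le> 1"
  proof
    assume "\<exists>i\<in>I. \<exists>j\<in>I. \<exists>K\<in>components (w j) S. min_abs (w i) S \<subseteq> basin (w j) S K"
    then obtain i j K where iI: "i \<in> I" and jI: "j \<in> I" and K: "K \<in> components (w j) S"
      and sub: "min_abs (w i) S \<subseteq> basin (w j) S K"
      by blast
    have i: "i \<in> {1..N}" and ex: "min_abs_exists (w i) S" and j: "j \<in> {1..N}"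
      using iI jI assms(4) by auto
    have meet: "\<exists>c\<in>C. c \<in> K" if C: "C \<in> ?R" for C
    proof -
      obtain m where m: "m \<in> C" "m \<in> min_abs (w i) S" using meets_min_abs[OF D C i ex] by blast
      then obtain a where "(w j ^^ a) m \<in> K" using sub unfolding basin_def by blast
      moreover have "(w j ^^ a) m \<in> C" by (rule class_orbit[OF D C m(1) j])
      ultimately show ?thesis by blast
    qed
    show "ecard ?R \<le> 1"
    proof (rule ecard_le1, intro ballI)
      fix C C' assume C: "C \<in> ?R" and C': "C' \<in> ?R"
      obtain c where c: "c \<in> C" "c \<in> K" using meet[OF C] by blast
      obtain c' where c': "c' \<in> C'" "c' \<in> K" using meet[OF C'] by blast
      show "C = C'" by (rule same_comp[OF D C C' j K c c'])
    qed
  qed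
qed

end
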